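(* Let $T\in\mathcal B(H)$ and suppose $\mathcal A_T$ admits a gauge action $\gamma$. Let $\mathcal J\ne(0)$ be a closed ideal of $\mathcal A_T$ which is gauge invariant, i.e. $\gamma_\lambda(\mathcal J)\subseteq\mathcal J$ for all $\lambda\in\mathbb T$. Then there is $n\in\mathbb N$, $n\ge1$, such that $\mathcal J=\langle T^n\rangle$, the closed ideal of $\mathcal A_T$ generated by $T^n$.
   Context: $H$ is a complex Hilbert space, $T\in\mathcal B(H)$, and $\mathcal A_T$ is the operator-norm closure in $\mathcal B(H)$ of the polynomials $p(T)$ with $p(0)=0$. $\mathbb T$ is the unit circle. A gauge action on $\mathcal A_T$ is a group homomorphism $\lambda\mapsto\gamma_\lambda$ from $\mathbb T$ into the isometric algebra automorphisms of $\mathcal A_T$ such that $\gamma_\lambda(T)=\lambda T$ for all $\lambda$ and $\lambda\mapsto\gamma_\lambda(S)$ is norm continuous for each $S\in\mathcal A_T$. For $R\in\mathcal A_T$, $\langle R\rangle$ denotes the smallest closed (two-sided) ideal of $\mathcal A_T$ containing $R$. *)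

theory Defs
  imports "HOL-Analysis.Analysis"
begin

text \<open>HOL-Analysis has no complex vector spaces; we introduce complex Hilbert
spaces as a type class: a real Banach space with a complex scalar multiplication
compatible with the real one, and a complex inner product (linear in the second,
conjugate-linear in the first argument) inducing the norm.\<close>

class complex_hilbert_space = banach +
  fixes scaleC :: "complex \<Rightarrow> 'a \<Rightarrow> 'a"  (infixr \<open>*\<^sub>C\<close> 75)
    and cinner :: "'a \<Rightarrow> 'a \<Rightarrow> complex"
  assumes scaleC_add_right: "a *\<^sub>C (x + y) = a *\<^sub>C x + a *\<^sub>C y"
    and scaleC_add_left: "(a + b) *\<^sub>C x = a *\<^sub>C x + b *\<^sub>C x"
    and scaleC_scaleC: "a *\<^sub>C (b *\<^sub>C x) = (a * b) *\<^sub>C x"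
    and scaleC_one: "1 *\<^sub>C x = x"
    and scaleR_scaleC: "scaleR r x = complex_of_real r *\<^sub>C x"
    and cinner_commute: "cinner x y = cnj (cinner y x)"
    and cinner_add_right: "cinner x (y + z) = cinner x y + cinner x z"
    and cinner_scaleC_right: "cinner x (a *\<^sub>C y) = a * cinner x y"
    and cinner_norm: "cinner x x = complex_of_real ((norm x)\<^sup>2)"

text \<open>Elements of B(H) are modelled as functions H \<Rightarrow> H which are complex linear
and bounded; the operator norm is onorm, products are compositions.\<close>

definition bounded_op :: "('a::complex_hilbert_space \<Rightarrow> 'a) \<Rightarrow> bool" where
  "bounded_op A \<longleftrightarrow> (\<forall>x y. A (x + y) = A x + A y) \<and> (\<forall>c x. A (c *\<^sub>C x) = c *\<^sub>C A x)
      \<and> (\<exists>K. \<forall>x. norm (A x) \<le> K * norm x)"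

definition opnorm_closure :: "('a::complex_hilbert_space \<Rightarrow> 'a) set \<Rightarrow> ('a \<Rightarrow> 'a) set" where
  "opnorm_closure P = {S. bounded_op S \<and> (\<forall>e>0. \<exists>p\<in>P. onorm (\<lambda>x. S x - p x) < e)}"

definition op_closed :: "('a::complex_hilbert_space \<Rightarrow> 'a) set \<Rightarrow> bool" where
  "op_closed J \<longleftrightarrow> opnorm_closure J \<subseteq> J"

definition poly_ops :: "('a::complex_hilbert_space \<Rightarrow> 'a) \<Rightarrow> ('a \<Rightarrow> 'a) set" where
  "poly_ops T = {(\<lambda>x. \<Sum>k\<in>{1..n}. c k *\<^sub>C (T ^^ k) x) | n c. True}"

definition alg_T :: "('a::complex_hilbert_space \<Rightarrow> 'a) \<Rightarrow> ('a \<Rightarrow> 'a) set" where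
  "alg_T T = opnorm_closure (poly_ops T)"

definition isometric_alg_aut :: "('a::complex_hilbert_space \<Rightarrow> 'a) \<Rightarrow> (('a \<Rightarrow> 'a) \<Rightarrow> ('a \<Rightarrow> 'a)) \<Rightarrow> bool" where
  "isometric_alg_aut T g \<longleftrightarrow> bij_betw g (alg_T T) (alg_T T)
     \<and> (\<forall>A\<in>alg_T T. \<forall>B\<in>alg_T T. g (\<lambda>x. A x + B x) = (\<lambda>x. g A x + g B x))
     \<and> (\<forall>c. \<forall>A\<in>alg_T T. g (\<lambda>x. c *\<^sub>C A x) = (\<lambda>x. c *\<^sub>C g A x))
     \<and> (\<forall>A\<in>alg_T T. \<forall>B\<in>alg_T T. g (A \<circ> B) = g A \<circ> g B)
     \<and> (\<forall>A\<in>alg_T T. onorm (g A) = onorm A)"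

definition gauge_action :: "('a::complex_hilbert_space \<Rightarrow> 'a) \<Rightarrow> (complex \<Rightarrow> ('a \<Rightarrow> 'a) \<Rightarrow> ('a \<Rightarrow> 'a)) \<Rightarrow> bool" where
  "gauge_action T \<gamma> \<longleftrightarrow>
     (\<forall>l. cmod l = 1 \<longrightarrow> isometric_alg_aut T (\<gamma> l))
   \<and> (\<forall>l m. cmod l = 1 \<longrightarrow> cmod m = 1 \<longrightarrow> (\<forall>S\<in>alg_T T. \<gamma> (l * m) S = \<gamma> l (\<gamma> m S)))
   \<and> (\<forall>l. cmod l = 1 \<longrightarrow> \<gamma> l T = (\<lambda>x. l *\<^sub>C T x))
   \<and> (\<forall>S\<in>alg_T T. \<forall>l0. cmod l0 = 1 \<longrightarrow> (\<forall>e>0. \<exists>d>0. \<forall>l. cmod l = 1 \<longrightarrow> cmod (l - l0) < d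
          \<longrightarrow> onorm (\<lambda>x. \<gamma> l S x - \<gamma> l0 S x) < e))"

definition closed_ideal :: "('a::complex_hilbert_space \<Rightarrow> 'a) \<Rightarrow> ('a \<Rightarrow> 'a) set \<Rightarrow> bool" where
  "closed_ideal T J \<longleftrightarrow> J \<subseteq> alg_T T \<and> (\<lambda>x. 0) \<in> J
     \<and> (\<forall>A\<in>J. \<forall>B\<in>J. (\<lambda>x. A x + B x) \<in> J)
     \<and> (\<forall>c. \<forall>A\<in>J. (\<lambda>x. c *\<^sub>C A x) \<in> J)
     \<and> (\<forall>A\<in>J. \<forall>B\<in>alg_T T. A \<circ> B \<in> J \<and> B \<circ> A \<in> J)
     \<and> op_closed J"

definition gen_ideal :: "('a::complex_hilbert_space \<Rightarrow> 'a) \<Rightarrow> ('a \<Rightarrow> 'a) \<Rightarrow> ('a \<Rightarrow> 'a) set" where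
  "gen_ideal T R = \<Inter> {J. closed_ideal T J \<and> R \<in> J}"

end

theory Submission
  imports Defs
begin


lemma scaleC_zero_left[simp]: "(0::complex) *\<^sub>C (x::'a::complex_hilbert_space) = 0"
  by (metis scaleR_scaleC scale_zero_left of_real_0)

lemma scaleC_minus1: "(-1::complex) *\<^sub>C (x::'a::complex_hilbert_space) = - x"
  by (metis scaleR_scaleC scaleR_minus1_left of_real_minus of_real_1)

lemma scaleC_zero_right[simp]: "(c::complex) *\<^sub>C (0::'a::complex_hilbert_space) = 0"
  by (metis add_cancel_right_right scaleC_add_right add_0)

lemma scaleC_diff_right: "(c::complex) *\<^sub>C ((x::'a::complex_hilbert_space) - y) = c *\<^sub>C x - c *\<^sub>C y"
proof -
  have "c *\<^sub>C (x - y) + c *\<^sub>C y = c *\<^sub>C x" by (metis diff_add_cancel scaleC_add_right)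
  then show ?thesis by (metis add_diff_cancel)
qed

lemma scaleC_diff_left: "((a::complex) - b) *\<^sub>C (x::'a::complex_hilbert_space) = a *\<^sub>C x - b *\<^sub>C x"
proof -
  have "(a - b) *\<^sub>C x + b *\<^sub>C x = a *\<^sub>C x" by (metis diff_add_cancel scaleC_add_left)
  then show ?thesis by (metis add_diff_cancel)
qed

lemma scaleC_sum_right: "(c::complex) *\<^sub>C (\<Sum>i\<in>I. f i) = (\<Sum>i\<in>I. c *\<^sub>C (f i::'a::complex_hilbert_space))"
  by (induction I rule: infinite_finite_induct) (auto simp: scaleC_add_right)

lemma scaleC_sum_left: "(\<Sum>i\<in>I. c i) *\<^sub>C (x::'a::complex_hilbert_space) = (\<Sum>i\<in>I. c i *\<^sub>C x)"
  by (induction I rule: infinite_finite_induct) (auto simp: scaleC_add_left)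

lemma norm_scaleC: "norm ((c::complex) *\<^sub>C (x::'a::complex_hilbert_space)) = cmod c * norm x"
proof -
  have "complex_of_real ((norm (c *\<^sub>C x))\<^sup>2) = cinner (c *\<^sub>C x) (c *\<^sub>C x)"
    by (simp add: cinner_norm)
  also have "\<dots> = c * cnj (c * cinner x x)"
    by (metis cinner_commute cinner_scaleC_right)
  also have "\<dots> = (c * cnj c) * complex_of_real ((norm x)\<^sup>2)"
    by (simp add: cinner_norm)
  also have "c * cnj c = complex_of_real ((cmod c)\<^sup>2)"
    by (rule complex_norm_square[symmetric])
  finally have "(norm (c *\<^sub>C x))\<^sup>2 = ((cmod c) * norm x)\<^sup>2"
    by (metis of_real_eq_iff of_real_mult power_mult_distrib)
  then show ?thesis
    by (meson norm_ge_zero power2_eq_imp_eq mult_nonneg_nonneg)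
qed

lemma bounded_op_linear: "bounded_op A \<Longrightarrow> bounded_linear A"
  unfolding bounded_op_def
proof (elim conjE exE)
  fix K assume h: "\<forall>x y. A (x + y) = A x + A y" "\<forall>c x. A (c *\<^sub>C x) = c *\<^sub>C A x"
     "\<forall>x. norm (A x) \<le> K * norm x"
  show "bounded_linear A"
  proof (rule bounded_linear_intro[where K=K])
    show "A (x + y) = A x + A y" for x y using h by auto
    show "A (r *\<^sub>R x) = r *\<^sub>R A x" for r x using h by (simp add: scaleR_scaleC)
    show "norm (A x) \<le> norm x * K" for x using h by (simp add: mult.commute)
  qed
qed

lemma bounded_opD: assumes "bounded_op A"
  shows "A (x + y) = A x + A y" "A (c *\<^sub>C x) = c *\<^sub>C A x"
  using assms unfolding bounded_op_def by auto

lemma bounded_op_add: "bounded_op A \<Longrightarrow> bounded_op B \<Longrightarrow> bounded_op (\<lambda>x. A x + B x)"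
proof -
  assume a: "bounded_op A" "bounded_op B"
  then obtain K1 K2 where k: "\<forall>x. norm (A x) \<le> K1 * norm x" "\<forall>x. norm (B x) \<le> K2 * norm x"
    unfolding bounded_op_def by blast
  have "norm (A x + B x) \<le> (K1 + K2) * norm x" for x
    using k norm_triangle_ineq[of "A x" "B x"] by (simp add: distrib_right) (smt (verit) k)
  then show ?thesis using a unfolding bounded_op_def by (auto simp: scaleC_add_right intro!: exI[of _ "K1+K2"])
qed

lemma bounded_op_scale: "bounded_op A \<Longrightarrow> bounded_op (\<lambda>x. c *\<^sub>C A x)"
proof -
  assume a: "bounded_op A"
  then obtain K1 where k: "\<forall>x. norm (A x) \<le> K1 * norm x"
    unfolding bounded_op_def by blast
  have "norm (c *\<^sub>C A x) \<le> (cmod c * K1) * norm x" for x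
    using k by (simp add: norm_scaleC mult.assoc mult_left_mono)
  then show ?thesis using a unfolding bounded_op_def
    by (auto simp: scaleC_add_right scaleC_scaleC mult.commute intro!: exI[of _ "cmod c * K1"])
qed

lemma bounded_op_zero: "bounded_op (\<lambda>x::'a::complex_hilbert_space. 0)"
  unfolding bounded_op_def by (auto intro!: exI[of _ 0])

lemma bounded_op_diff: "bounded_op A \<Longrightarrow> bounded_op B \<Longrightarrow> bounded_op (\<lambda>x. A x - B x)"
proof -
  assume "bounded_op A" "bounded_op B"
  then have "bounded_op (\<lambda>x. A x + (-1) *\<^sub>C B x)" by (intro bounded_op_add bounded_op_scale)
  then show ?thesis by (simp add: scaleC_minus1)
qed

lemma bounded_op_sum: "finite I \<Longrightarrow> (\<And>i. i \<in> I \<Longrightarrow> bounded_op (f i)) \<Longrightarrow> bounded_op (\<lambda>x. \<Sum>i\<in>I. f i x)"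
  by (induction I rule: finite_induct) (auto intro: bounded_op_add bounded_op_zero)


lemma bounded_op_comp: "bounded_op A \<Longrightarrow> bounded_op B \<Longrightarrow> bounded_op (A \<circ> B)"
proof -
  assume a: "bounded_op A" "bounded_op B"
  then have "bounded_linear (A \<circ> B)"
    by (simp add: bounded_linear_compose bounded_op_linear comp_def)
  then obtain K where "\<forall>x. norm ((A \<circ> B) x) \<le> norm x * K"
    using bounded_linear.bounded by blast
  then show ?thesis using a unfolding bounded_op_def
    by (auto simp: mult.commute intro!: exI[of _ K])
qed

lemma bounded_op_id: "bounded_op (id::'a::complex_hilbert_space \<Rightarrow> 'a)"
  unfolding bounded_op_def by (auto intro!: exI[of _ 1])

lemma bounded_op_funpow: "bounded_op T \<Longrightarrow> bounded_op (T ^^ k)"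
  by (induction k) (auto intro: bounded_op_comp bounded_op_id)

lemma funpow_scaleC: "bounded_op T \<Longrightarrow> (T ^^ k) (c *\<^sub>C x) = c *\<^sub>C (T ^^ k) x"
  using bounded_opD(2)[OF bounded_op_funpow] by blast

lemma onorm_scaleC_le: "bounded_op f \<Longrightarrow> onorm (\<lambda>x. c *\<^sub>C f x) \<le> cmod c * onorm f"
proof (rule onorm_bound)
  assume f: "bounded_op f"
  show "0 \<le> cmod c * onorm f" using onorm_pos_le[OF bounded_op_linear[OF f]] by simp
  fix x
  have "norm (c *\<^sub>C f x) = cmod c * norm (f x)" by (simp add: norm_scaleC)
  also have "\<dots> \<le> cmod c * (onorm f * norm x)"
    using onorm[OF bounded_op_linear[OF f]] by (simp add: mult_left_mono)
  finally show "norm (c *\<^sub>C f x) \<le> cmod c * onorm f * norm x" by (simp add: mult.assoc)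
qed

lemma onorm_scaleC: "bounded_op f \<Longrightarrow> onorm (\<lambda>x. c *\<^sub>C f x) = cmod c * onorm f"
proof (cases "c = 0")
  case True
  then show ?thesis by (simp add: onorm_zero)
next
  case False
  assume f: "bounded_op f"
  have e: "(\<lambda>x. inverse c *\<^sub>C (c *\<^sub>C f x)) = f"
  proof
    fix x show "inverse c *\<^sub>C (c *\<^sub>C f x) = f x"
      using False by (metis scaleC_scaleC left_inverse scaleC_one)
  qed
  have "onorm (\<lambda>x. inverse c *\<^sub>C (c *\<^sub>C f x)) \<le> cmod (inverse c) * onorm (\<lambda>x. c *\<^sub>C f x)"
    by (rule onorm_scaleC_le[OF bounded_op_scale[OF f]])
  then have "onorm f \<le> cmod (inverse c) * onorm (\<lambda>x. c *\<^sub>C f x)" by (simp only: e)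
  then have "cmod c * onorm f \<le> cmod c * (cmod (inverse c) * onorm (\<lambda>x. c *\<^sub>C f x))"
    by (simp add: mult_left_mono)
  also have "\<dots> = onorm (\<lambda>x. c *\<^sub>C f x)" using False
    by (simp add: norm_inverse)
  finally show ?thesis using onorm_scaleC_le[OF f, of c] by linarith
qed

lemma onorm_diff_commute: "onorm (\<lambda>x. A x - B x) = onorm (\<lambda>x. B x - A x)"
proof -
  have "(\<lambda>x. B x - A x) = (\<lambda>x. - (A x - B x))" by simp
  then show ?thesis using onorm_neg[of "\<lambda>x. A x - B x"] by simp
qed

lemma onorm_diff_tri: "bounded_op A \<Longrightarrow> bounded_op B \<Longrightarrow> bounded_op C \<Longrightarrow>
   onorm (\<lambda>x. A x - C x) \<le> onorm (\<lambda>x. A x - B x) + onorm (\<lambda>x. B x - C x)"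
proof -
  assume a: "bounded_op A" "bounded_op B" "bounded_op C"
  have "(\<lambda>x. A x - C x) = (\<lambda>x. (A x - B x) + (B x - C x))" by simp
  then show ?thesis using onorm_triangle[OF bounded_op_linear[OF bounded_op_diff[OF a(1,2)]]
        bounded_op_linear[OF bounded_op_diff[OF a(2,3)]]] by simp
qed

lemma onorm_add_le: "bounded_op A \<Longrightarrow> bounded_op B \<Longrightarrow> onorm (\<lambda>x. A x + B x) \<le> onorm A + onorm B"
  by (intro onorm_triangle bounded_op_linear)

lemma onorm_diff_le: "bounded_op A \<Longrightarrow> bounded_op B \<Longrightarrow> onorm (\<lambda>x. A x - B x) \<le> onorm A + onorm B"
proof -
  assume a: "bounded_op A" "bounded_op B"
  have "(\<lambda>x. A x - B x) = (\<lambda>x. A x + - B x)" by simp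
  moreover have "onorm (\<lambda>x. A x + - B x) \<le> onorm A + onorm (\<lambda>x. - B x)"
    using a by (intro onorm_triangle bounded_op_linear bounded_linear_minus) 
  ultimately show ?thesis by (simp add: onorm_neg)
qed

lemma onorm_sum_op: "finite I \<Longrightarrow> (\<And>i. i \<in> I \<Longrightarrow> bounded_op (f i)) \<Longrightarrow>
   onorm (\<lambda>x. \<Sum>i\<in>I. f i x) \<le> (\<Sum>i\<in>I. onorm (f i))"
  by (intro onorm_sum bounded_op_linear)

lemma onorm_nonneg: "bounded_op A \<Longrightarrow> 0 \<le> onorm A"
  by (intro onorm_pos_le bounded_op_linear)

lemma onorm_zero_imp: "bounded_op A \<Longrightarrow> onorm A = 0 \<Longrightarrow> A = (\<lambda>x. 0)"
  using onorm_eq_0[OF bounded_op_linear] by auto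



lemma sum_cut: "n1 \<le> (n::nat) \<Longrightarrow> (\<Sum>k\<in>{1..n}. if k \<le> n1 then f k else 0) = (\<Sum>k\<in>{1..n1}. f k)"
  by (rule sum.mono_neutral_cong_right) auto

lemma poly_ops_bounded: "bounded_op T \<Longrightarrow> p \<in> poly_ops T \<Longrightarrow> bounded_op p"
proof -
  assume T: "bounded_op T" and "p \<in> poly_ops T"
  then obtain n c where p: "p = (\<lambda>x. \<Sum>k\<in>{1..n}. c k *\<^sub>C (T ^^ k) x)"
    unfolding poly_ops_def by blast
  show ?thesis unfolding p
    by (rule bounded_op_sum) (simp_all add: bounded_op_scale bounded_op_funpow T)
qed

lemma alg_bounded: "S \<in> alg_T T \<Longrightarrow> bounded_op S"
  unfolding alg_T_def opnorm_closure_def by auto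

lemma poly_in_alg: "bounded_op T \<Longrightarrow> p \<in> poly_ops T \<Longrightarrow> p \<in> alg_T T"
  unfolding alg_T_def opnorm_closure_def
proof (intro CollectI conjI allI impI)
  assume T: "bounded_op T" and p: "p \<in> poly_ops T"
  show "bounded_op p" by (rule poly_ops_bounded[OF T p])
  fix e :: real assume "e > 0"
  then show "\<exists>q\<in>poly_ops T. onorm (\<lambda>x. p x - q x) < e"
    using p by (intro bexI[of _ p]) (simp_all add: onorm_zero)
qed

lemma funpow_poly: "1 \<le> k \<Longrightarrow> T ^^ k \<in> poly_ops T"
proof -
  assume k: "1 \<le> k"
  have "(\<lambda>x. \<Sum>i\<in>{1..k}. (if i = k then 1 else 0) *\<^sub>C (T ^^ i) x) = T ^^ k"
  proof
    fix x
    have "(\<Sum>i\<in>{1..k}. (if i = k then 1 else 0) *\<^sub>C (T ^^ i) x) = (\<Sum>i\<in>{1..k}. if i = k then (T ^^ i) x else 0)"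
      by (intro sum.cong) (auto simp: scaleC_one)
    also have "\<dots> = (T ^^ k) x" using k by (simp add: sum.delta)
    finally show "(\<Sum>i\<in>{1..k}. (if i = k then 1 else 0) *\<^sub>C (T ^^ i) x) = (T ^^ k) x" .
  qed
  then show ?thesis unfolding poly_ops_def by (intro CollectI exI[of _ k] exI[of _ "\<lambda>i. if i = k then 1 else 0"]) simp
qed

lemma zero_poly: "(\<lambda>x. 0) \<in> poly_ops T"
  unfolding poly_ops_def by (intro CollectI exI[of _ 0] exI[of _ "\<lambda>k. 0"]) simp

lemma poly_add: "p \<in> poly_ops T \<Longrightarrow> q \<in> poly_ops T \<Longrightarrow> (\<lambda>x. p x + q x) \<in> poly_ops T"
proof -
  assume "p \<in> poly_ops T" "q \<in> poly_ops T"
  then obtain n1 c1 n2 c2 where p: "p = (\<lambda>x. \<Sum>k\<in>{1..n1}. c1 k *\<^sub>C (T ^^ k) x)"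
    and q: "q = (\<lambda>x. \<Sum>k\<in>{1..n2}. c2 k *\<^sub>C (T ^^ k) x)"
    unfolding poly_ops_def by blast
  define n where "n = max n1 n2"
  define c where "c k = (if k \<le> n1 then c1 k else 0) + (if k \<le> n2 then c2 k else 0)" for k
  have "(\<lambda>x. p x + q x) = (\<lambda>x. \<Sum>k\<in>{1..n}. c k *\<^sub>C (T ^^ k) x)"
  proof
    fix x
    have "(\<Sum>k\<in>{1..n}. c k *\<^sub>C (T ^^ k) x) =
       (\<Sum>k\<in>{1..n}. if k \<le> n1 then c1 k *\<^sub>C (T ^^ k) x else 0) + (\<Sum>k\<in>{1..n}. if k \<le> n2 then c2 k *\<^sub>C (T ^^ k) x else 0)"
      unfolding sum.distrib[symmetric] by (intro sum.cong refl) (simp add: c_def scaleC_add_left)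
    also have "\<dots> = p x + q x" unfolding p q
      using sum_cut[of n1 n "\<lambda>k. c1 k *\<^sub>C (T ^^ k) x"] sum_cut[of n2 n "\<lambda>k. c2 k *\<^sub>C (T ^^ k) x"]
      by (simp add: n_def)
    finally show "p x + q x = (\<Sum>k\<in>{1..n}. c k *\<^sub>C (T ^^ k) x)" by simp
  qed
  then show ?thesis unfolding poly_ops_def by (intro CollectI exI[of _ n] exI[of _ c]) simp
qed

lemma poly_scale: "p \<in> poly_ops T \<Longrightarrow> (\<lambda>x. a *\<^sub>C p x) \<in> poly_ops T"
proof -
  assume "p \<in> poly_ops T"
  then obtain n1 c1 where p: "p = (\<lambda>x. \<Sum>k\<in>{1..n1}. c1 k *\<^sub>C (T ^^ k) x)"
    unfolding poly_ops_def by blast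
  have "(\<lambda>x. a *\<^sub>C p x) = (\<lambda>x. \<Sum>k\<in>{1..n1}. (a * c1 k) *\<^sub>C (T ^^ k) x)"
    unfolding p by (simp add: scaleC_sum_right scaleC_scaleC)
  then show ?thesis unfolding poly_ops_def by (intro CollectI exI[of _ n1] exI[of _ "\<lambda>k. a * c1 k"]) simp
qed

lemma alg_approx: "S \<in> alg_T T \<Longrightarrow> e > 0 \<Longrightarrow> \<exists>p\<in>poly_ops T. onorm (\<lambda>x. S x - p x) < e"
  unfolding alg_T_def opnorm_closure_def by blast

lemma alg_add: assumes T: "bounded_op T" and S: "S \<in> alg_T T" "R \<in> alg_T T"
  shows "(\<lambda>x. S x + R x) \<in> alg_T T"
  unfolding alg_T_def opnorm_closure_def
proof (intro CollectI conjI allI impI)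
  have bS: "bounded_op S" "bounded_op R" using S by (simp_all add: alg_bounded)
  show "bounded_op (\<lambda>x. S x + R x)" using bS by (intro bounded_op_add)
  fix e :: real assume e: "e > 0"
  then have e2: "e/2 > 0" by simp
  obtain p where p: "p \<in> poly_ops T" "onorm (\<lambda>x. S x - p x) < e/2" using alg_approx[OF S(1) e2] by blast
  obtain q where q: "q \<in> poly_ops T" "onorm (\<lambda>x. R x - q x) < e/2" using alg_approx[OF S(2) e2] by blast
  have "onorm (\<lambda>x. S x + R x - (p x + q x)) = onorm (\<lambda>x. (S x - p x) + (R x - q x))"
    by (rule arg_cong[where f=onorm]) (simp add: fun_eq_iff algebra_simps)
  also have "\<dots> \<le> onorm (\<lambda>x. S x - p x) + onorm (\<lambda>x. R x - q x)"
    using bS poly_ops_bounded[OF T p(1)] poly_ops_bounded[OF T q(1)] by (intro onorm_add_le bounded_op_diff)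
  finally have "onorm (\<lambda>x. S x + R x - (p x + q x)) < e" using p(2) q(2) by linarith
  moreover have "(\<lambda>x. p x + q x) \<in> poly_ops T" by (rule poly_add[OF p(1) q(1)])
  ultimately show "\<exists>p\<in>poly_ops T. onorm (\<lambda>x. S x + R x - p x) < e"
    by (intro bexI[of _ "\<lambda>x. p x + q x"]) simp_all
qed

lemma alg_scale: assumes T: "bounded_op T" and S: "S \<in> alg_T T"
  shows "(\<lambda>x. a *\<^sub>C S x) \<in> alg_T T"
  unfolding alg_T_def opnorm_closure_def
proof (intro CollectI conjI allI impI)
  have bS: "bounded_op S" using S by (simp add: alg_bounded)
  show "bounded_op (\<lambda>x. a *\<^sub>C S x)" using bS by (intro bounded_op_scale)
  fix e :: real assume e: "e > 0"
  have pos: "1 + cmod a > 0" by (simp add: add_pos_nonneg)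
  then have e2: "e/(1 + cmod a) > 0" using e by simp
  obtain p where p: "p \<in> poly_ops T" "onorm (\<lambda>x. S x - p x) < e/(1 + cmod a)"
    using alg_approx[OF S(1) e2] by blast
  have "onorm (\<lambda>x. a *\<^sub>C S x - a *\<^sub>C p x) = onorm (\<lambda>x. a *\<^sub>C (S x - p x))"
    by (simp add: scaleC_diff_right)
  also have "\<dots> = cmod a * onorm (\<lambda>x. S x - p x)"
    using bS poly_ops_bounded[OF T p(1)] by (intro onorm_scaleC bounded_op_diff)
  also have "\<dots> \<le> cmod a * (e / (1 + cmod a))" using p(2) by (intro mult_left_mono) simp_all
  also have "\<dots> = e - e / (1 + cmod a)" using pos by (simp add: field_simps)
  also have "\<dots> < e" using e2 by linarith
  finally have "onorm (\<lambda>x. a *\<^sub>C S x - a *\<^sub>C p x) < e" .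
  moreover have "(\<lambda>x. a *\<^sub>C p x) \<in> poly_ops T" by (rule poly_scale[OF p(1)])
  ultimately show "\<exists>p\<in>poly_ops T. onorm (\<lambda>x. a *\<^sub>C S x - p x) < e"
    by (intro bexI[of _ "\<lambda>x. a *\<^sub>C p x"]) simp_all
qed

lemma alg_diff: assumes T: "bounded_op T" and S: "S \<in> alg_T T" "R \<in> alg_T T"
  shows "(\<lambda>x. S x - R x) \<in> alg_T T"
proof -
  have "(\<lambda>x. S x + (-1) *\<^sub>C R x) \<in> alg_T T" by (intro alg_add alg_scale T S)
  then show ?thesis by (simp add: scaleC_minus1)
qed

lemma alg_zero: "bounded_op T \<Longrightarrow> (\<lambda>x. 0) \<in> alg_T T"
  by (rule poly_in_alg[OF _ zero_poly])

lemma alg_funpow: "bounded_op T \<Longrightarrow> 1 \<le> k \<Longrightarrow> T ^^ k \<in> alg_T T"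
  by (rule poly_in_alg[OF _ funpow_poly])



locale gset =
  fixes T :: "'a::complex_hilbert_space \<Rightarrow> 'a" and \<gamma> :: "complex \<Rightarrow> ('a \<Rightarrow> 'a) \<Rightarrow> ('a \<Rightarrow> 'a)"
  assumes T: "bounded_op T" and G: "gauge_action T \<gamma>"
begin

lemma aut: "cmod l = 1 \<Longrightarrow> isometric_alg_aut T (\<gamma> l)"
  using G unfolding gauge_action_def by blast

lemma g_maps: "cmod l = 1 \<Longrightarrow> S \<in> alg_T T \<Longrightarrow> \<gamma> l S \<in> alg_T T"
  using aut unfolding isometric_alg_aut_def bij_betw_def by blast

lemma g_add: "cmod l = 1 \<Longrightarrow> S \<in> alg_T T \<Longrightarrow> R \<in> alg_T T \<Longrightarrow> \<gamma> l (\<lambda>x. S x + R x) = (\<lambda>x. \<gamma> l S x + \<gamma> l R x)"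
  using aut unfolding isometric_alg_aut_def by blast

lemma g_scale: "cmod l = 1 \<Longrightarrow> S \<in> alg_T T \<Longrightarrow> \<gamma> l (\<lambda>x. c *\<^sub>C S x) = (\<lambda>x. c *\<^sub>C \<gamma> l S x)"
  using aut unfolding isometric_alg_aut_def by blast

lemma g_mult: "cmod l = 1 \<Longrightarrow> S \<in> alg_T T \<Longrightarrow> R \<in> alg_T T \<Longrightarrow> \<gamma> l (S \<circ> R) = \<gamma> l S \<circ> \<gamma> l R"
  using aut unfolding isometric_alg_aut_def by blast

lemma g_iso: "cmod l = 1 \<Longrightarrow> S \<in> alg_T T \<Longrightarrow> onorm (\<gamma> l S) = onorm S"
  using aut unfolding isometric_alg_aut_def by blast

lemma g_T: "cmod l = 1 \<Longrightarrow> \<gamma> l T = (\<lambda>x. l *\<^sub>C T x)"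
  using G unfolding gauge_action_def by blast

lemma g_diff: assumes l: "cmod l = 1" and S: "S \<in> alg_T T" "R \<in> alg_T T"
  shows "\<gamma> l (\<lambda>x. S x - R x) = (\<lambda>x. \<gamma> l S x - \<gamma> l R x)"
proof -
  have R': "(\<lambda>x. (-1) *\<^sub>C R x) \<in> alg_T T" by (rule alg_scale[OF T S(2)])
  have "\<gamma> l (\<lambda>x. S x + (\<lambda>x. (-1) *\<^sub>C R x) x) = (\<lambda>x. \<gamma> l S x + \<gamma> l (\<lambda>x. (-1) *\<^sub>C R x) x)"
    by (rule g_add[OF l S(1) R'])
  also have "\<gamma> l (\<lambda>x. (-1) *\<^sub>C R x) = (\<lambda>x. (-1) *\<^sub>C \<gamma> l R x)" by (rule g_scale[OF l S(2)])
  finally show ?thesis by (simp add: scaleC_minus1)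
qed

lemma g_funpow: assumes l: "cmod l = 1" shows "1 \<le> k \<Longrightarrow> \<gamma> l (T ^^ k) = (\<lambda>x. (l ^ k) *\<^sub>C (T ^^ k) x)"
proof (induction k rule: nat_induct_at_least)
  case base
  have "T ^^ 1 = T" by (simp add: fun_eq_iff)
  then show ?case using g_T[OF l] by simp
next
  case (Suc k)
  have "T ^^ Suc k = T \<circ> T ^^ k" by simp
  then have "\<gamma> l (T ^^ Suc k) = \<gamma> l T \<circ> \<gamma> l (T ^^ k)"
  proof -
    have a1: "T \<in> alg_T T" using alg_funpow[OF T, of 1] by (simp add: fun_eq_iff)
    show ?thesis using g_mult[OF l a1 alg_funpow[OF T Suc.hyps]] \<open>T ^^ Suc k = T \<circ> T ^^ k\<close> by simp
  qed
  also have "\<dots> = (\<lambda>x. (l ^ Suc k) *\<^sub>C (T ^^ Suc k) x)"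
    unfolding Suc.IH g_T[OF l] by (simp add: fun_eq_iff bounded_opD(2)[OF T] scaleC_scaleC)
  finally show ?case .
qed

lemma g_poly: assumes l: "cmod l = 1"
  shows "\<gamma> l (\<lambda>x. \<Sum>k\<in>{1..n}. c k *\<^sub>C (T ^^ k) x) = (\<lambda>x. \<Sum>k\<in>{1..n}. (c k * l ^ k) *\<^sub>C (T ^^ k) x)"
proof (induction n)
  case 0
  have z: "(\<lambda>x::'a. 0) \<in> alg_T T" by (rule alg_zero[OF T])
  have "\<gamma> l (\<lambda>x. (\<lambda>x. 0) x + (\<lambda>x::'a. 0) x) = (\<lambda>x. \<gamma> l (\<lambda>x. 0) x + \<gamma> l (\<lambda>x. 0) x)"
    by (rule g_add[OF l z z])
  then have "\<gamma> l (\<lambda>x. 0) = (\<lambda>x. 0)" by (simp add: fun_eq_iff)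
  then show ?case by simp
next
  case (Suc n)
  have P: "(\<lambda>x. \<Sum>k\<in>{1..n}. c k *\<^sub>C (T ^^ k) x) \<in> alg_T T"
    by (rule poly_in_alg[OF T]) (unfold poly_ops_def, blast)
  have Q: "(\<lambda>x. c (Suc n) *\<^sub>C (T ^^ Suc n) x) \<in> alg_T T"
    by (rule alg_scale[OF T alg_funpow[OF T]]) simp
  have e: "(\<lambda>x. \<Sum>k\<in>{1..Suc n}. c k *\<^sub>C (T ^^ k) x) =
     (\<lambda>x. (\<lambda>x. \<Sum>k\<in>{1..n}. c k *\<^sub>C (T ^^ k) x) x + (\<lambda>x. c (Suc n) *\<^sub>C (T ^^ Suc n) x) x)"
    by (simp add: fun_eq_iff)
  have "\<gamma> l (\<lambda>x. c (Suc n) *\<^sub>C (T ^^ Suc n) x) = (\<lambda>x. c (Suc n) *\<^sub>C \<gamma> l (T ^^ Suc n) x)"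
    by (rule g_scale[OF l alg_funpow[OF T]]) simp
  also have "\<dots> = (\<lambda>x. (c (Suc n) * l ^ Suc n) *\<^sub>C (T ^^ Suc n) x)"
    by (subst g_funpow[OF l]) (simp, simp only: scaleC_scaleC)
  finally have h: "\<gamma> l (\<lambda>x. c (Suc n) *\<^sub>C (T ^^ Suc n) x) = (\<lambda>x. (c (Suc n) * l ^ Suc n) *\<^sub>C (T ^^ Suc n) x)" .
  show ?case unfolding e g_add[OF l P Q] Suc.IH h
    by (simp add: fun_eq_iff)
qed

lemma g_one: assumes S: "S \<in> alg_T T" shows "\<gamma> 1 S = S"
proof -
  have l: "cmod (1::complex) = 1" by simp
  have "\<gamma> (1 * 1) S = \<gamma> 1 (\<gamma> 1 S)" using G S unfolding gauge_action_def by (metis l)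
  then have "\<gamma> 1 (\<gamma> 1 S) = \<gamma> 1 S" by simp
  moreover have "inj_on (\<gamma> 1) (alg_T T)" using aut[OF l] unfolding isometric_alg_aut_def bij_betw_def by blast
  ultimately show ?thesis using g_maps[OF l S] S by (meson inj_onD)
qed

lemma g_cont: "S \<in> alg_T T \<Longrightarrow> e > 0 \<Longrightarrow> \<exists>d>0. \<forall>l. cmod l = 1 \<longrightarrow> cmod (l - 1) < d \<longrightarrow> onorm (\<lambda>x. \<gamma> l S x - S x) < e"
proof -
  assume S: "S \<in> alg_T T" and e: "e > 0"
  have "\<exists>d>0. \<forall>l. cmod l = 1 \<longrightarrow> cmod (l - 1) < d \<longrightarrow> onorm (\<lambda>x. \<gamma> l S x - \<gamma> 1 S x) < e"
    using G S e unfolding gauge_action_def by (metis norm_one)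
  then show ?thesis using g_one[OF S] by simp
qed

end


definition rt :: "nat \<Rightarrow> nat \<Rightarrow> complex" where "rt N j = cis (2 * pi * real j / real N)"

lemma rt_norm[simp]: "cmod (rt N j) = 1" by (simp add: rt_def)

lemma rt_pow: "rt N j ^ k = rt N (j * k)"
  unfolding rt_def by (subst Complex.DeMoivre) (simp add: algebra_simps)

lemma rt_eq_1: assumes N: "N > 0" shows "rt N d = 1 \<longleftrightarrow> N dvd d"
proof
  assume "rt N d = 1"
  then have "cos (2 * pi * real d / real N) = 1" unfolding rt_def by (metis cis.sel(1) one_complex.sel(1))
  then obtain m :: int where m: "2 * pi * real d / real N = real_of_int m * 2 * pi"
    by (subst (asm) cos_one_2pi_int) blast
  then have "real d = real_of_int m * real N" using N by (simp add: field_simps)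
  then have "int d = m * int N" by (metis of_int_eq_iff of_int_mult of_int_of_nat_eq)
  then show "N dvd d" by (metis dvd_triv_right int_dvd_int_iff dvd_def mult.commute)
next
  assume "N dvd d"
  then obtain t where t: "d = N * t" by blast
  have "2 * pi * real d / real N = 2 * pi * real t" using N t by (simp add: field_simps)
  then show "rt N d = 1" unfolding rt_def by (metis cis_multiple_2pi Ints_of_nat)
qed

lemma rt_orth: assumes N: "N > 0"
  shows "(\<Sum>j<N. rt N (j * d)) = (if N dvd d then of_nat N else 0)"
proof (cases "N dvd d")
  case True
  then have "rt N (j * d) = 1" for j using rt_eq_1[OF N] by simp
  then show ?thesis using True by simp
next
  case False
  define z where "z = rt N d"
  have z1: "z \<noteq> 1" using False rt_eq_1[OF N] z_def by simp
  have "rt N (j * d) = z ^ j" for j unfolding z_def rt_pow by (simp add: mult.commute)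
  then have "(\<Sum>j<N. rt N (j * d)) = (\<Sum>j<N. z ^ j)" by simp
  also have "\<dots> = (z ^ N - 1) / (z - 1)" using z1 by (rule geometric_sum)
  also have "z ^ N = 1" unfolding z_def rt_pow by (simp add: rt_eq_1[OF N])
  finally show ?thesis using False by simp
qed

context gset begin

definition Av :: "nat \<Rightarrow> (nat \<Rightarrow> complex) \<Rightarrow> ('a \<Rightarrow> 'a) \<Rightarrow> ('a \<Rightarrow> 'a)" where
  "Av N w S = (\<lambda>x. \<Sum>j<N. w j *\<^sub>C \<gamma> (rt N j) S x)"

lemma av_bounded: "S \<in> alg_T T \<Longrightarrow> bounded_op (Av N w S)"
  unfolding Av_def
  by (rule bounded_op_sum) (simp_all add: bounded_op_scale alg_bounded[OF g_maps[OF rt_norm]])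

lemma av_lip: assumes S: "S \<in> alg_T T" "R \<in> alg_T T"
  shows "onorm (\<lambda>x. Av N w S x - Av N w R x) \<le> (\<Sum>j<N. cmod (w j)) * onorm (\<lambda>x. S x - R x)"
proof -
  have b: "bounded_op (\<gamma> (rt N j) (\<lambda>x. S x - R x))" for j
    by (rule alg_bounded[OF g_maps[OF rt_norm alg_diff[OF T S]]])
  have "onorm (\<lambda>x. Av N w S x - Av N w R x) = onorm (\<lambda>x. \<Sum>j<N. w j *\<^sub>C \<gamma> (rt N j) (\<lambda>x. S x - R x) x)"
    unfolding Av_def g_diff[OF rt_norm S] by (simp add: fun_eq_iff scaleC_diff_right sum_subtractf)
  also have "\<dots> \<le> (\<Sum>j<N. onorm (\<lambda>x. w j *\<^sub>C \<gamma> (rt N j) (\<lambda>x. S x - R x) x))"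
    by (rule onorm_sum_op) (simp_all add: bounded_op_scale b)
  also have "\<dots> = (\<Sum>j<N. cmod (w j) * onorm (\<lambda>x. S x - R x))"
    by (intro sum.cong refl) (simp add: onorm_scaleC b g_iso alg_diff T S)
  finally show ?thesis by (simp add: sum_distrib_right)
qed

lemma av_poly: "Av N w (\<lambda>x. \<Sum>k\<in>{1..n}. c k *\<^sub>C (T ^^ k) x) =
   (\<lambda>x. \<Sum>k\<in>{1..n}. (c k * (\<Sum>j<N. w j * rt N (j * k))) *\<^sub>C (T ^^ k) x)"
proof
  fix x
  have "Av N w (\<lambda>x. \<Sum>k\<in>{1..n}. c k *\<^sub>C (T ^^ k) x) x =
     (\<Sum>j<N. \<Sum>k\<in>{1..n}. (w j * (c k * rt N (j * k))) *\<^sub>C (T ^^ k) x)"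
    unfolding Av_def g_poly[OF rt_norm] by (simp add: scaleC_sum_right scaleC_scaleC rt_pow)
  also have "\<dots> = (\<Sum>k\<in>{1..n}. \<Sum>j<N. (w j * (c k * rt N (j * k))) *\<^sub>C (T ^^ k) x)"
    by (rule sum.swap)
  also have "\<dots> = (\<Sum>k\<in>{1..n}. (c k * (\<Sum>j<N. w j * rt N (j * k))) *\<^sub>C (T ^^ k) x)"
    by (intro sum.cong refl) (simp add: scaleC_sum_left[symmetric] sum_distrib_left algebra_simps)
  finally show "Av N w (\<lambda>x. \<Sum>k\<in>{1..n}. c k *\<^sub>C (T ^^ k) x) x =
     (\<Sum>k\<in>{1..n}. (c k * (\<Sum>j<N. w j * rt N (j * k))) *\<^sub>C (T ^^ k) x)" .
qed

end


lemma rt_mult: "rt N a * rt N b = rt N (a + b)"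
  unfolding rt_def cis_mult by (simp add: add_divide_distrib algebra_simps)

lemma rt_N: "N > 0 \<Longrightarrow> rt N (j * N) = 1"
  using rt_eq_1 by simp

lemma rt_cnj: assumes N: "N > 0" and b: "b \<le> N" shows "cnj (rt N (j * b)) = rt N (j * (N - b))"
proof -
  have "j * b + j * (N - b) = j * N" using b by (simp add: add_mult_distrib2[symmetric])
  then have "rt N (j * b) * rt N (j * (N - b)) = 1" using rt_N[OF N, of j] unfolding rt_mult by simp
  moreover have "rt N (j * b) * cnj (rt N (j * b)) = 1"
    by (metis complex_norm_square of_real_1 one_power2 rt_norm)
  moreover have "rt N (j * b) \<noteq> 0" by (metis norm_zero rt_norm zero_neq_one)
  ultimately show ?thesis by (metis mult_left_cancel)
qed

lemma dvd_between: assumes "N dvd (x::nat)" "0 < x" "x < 2 * N" shows "x = N"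
proof -
  obtain q where q: "x = N * q" using assms(1) by blast
  have "q < 2"
  proof (rule ccontr)
    assume "\<not> q < 2"
    then have "N * 2 \<le> N * q" by simp
    then show False using q assms(3) by linarith
  qed
  moreover have "q \<noteq> 0" using q assms(2) by auto
  ultimately have "q = 1" by linarith
  then show ?thesis using q by simp
qed

definition wF :: "nat \<Rightarrow> nat \<Rightarrow> nat \<Rightarrow> complex" where
  "wF N n j = rt N (j * (N - n)) / of_nat N"

lemma wF_norm: "N > 0 \<Longrightarrow> (\<Sum>j<N. cmod (wF N n j)) = 1"
  unfolding wF_def by (simp add: norm_divide)

lemma wF_coef: assumes "0 < n" "n < N" "0 < k" "k < N"
  shows "(\<Sum>j<N. wF N n j * rt N (j * k)) = (if k = n then 1 else 0)"
proof -
  have N: "N > 0" using assms by simp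
  have "(\<Sum>j<N. wF N n j * rt N (j * k)) = (\<Sum>j<N. rt N (j * (N - n + k))) / of_nat N"
    unfolding wF_def by (simp add: sum_divide_distrib rt_mult algebra_simps)
  also have "(\<Sum>j<N. rt N (j * (N - n + k))) = (if N dvd (N - n + k) then of_nat N else 0)"
    by (rule rt_orth[OF N])
  also have "N dvd (N - n + k) \<longleftrightarrow> k = n"
  proof
    assume d: "N dvd (N - n + k)"
    have "0 < N - n + k" "N - n + k < 2 * N" using assms by auto
    then have "N - n + k = N" by (rule dvd_between[OF d])
    then show "k = n" using assms by simp
  qed (use assms in auto)
  finally show ?thesis using N by simp
qed

definition wK :: "nat \<Rightarrow> nat \<Rightarrow> nat \<Rightarrow> complex" where
  "wK N M j = complex_of_real ((cmod (\<Sum>a<M. rt N (j * a)))\<^sup>2 / (real M * real N))"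

lemma count_pairs: "(\<Sum>a<M. \<Sum>b<M. if b = a + k then (1::complex) else 0) = of_nat (M - k)"
proof -
  have "(\<Sum>a<M. \<Sum>b<M. if b = a + k then (1::complex) else 0) = (\<Sum>a<M. if a + k < M then 1 else 0)"
    by (intro sum.cong refl) (simp add: sum.delta')
  also have "\<dots> = of_nat (card {a. a < M \<and> a + k < M})"
    by (simp add: sum.If_cases Int_def)
  also have "{a. a < M \<and> a + k < M} = {..<M - k}" by auto
  finally show ?thesis by simp
qed

lemma wK_coef: assumes N: "N > 0" and M: "M > 0" and kM: "k + M \<le> N"
  shows "(\<Sum>j<N. wK N M j * rt N (j * k)) = of_nat (M - k) / of_nat M"
proof -
  have sq: "complex_of_real ((cmod (\<Sum>a<M. rt N (j * a)))\<^sup>2) = (\<Sum>a<M. \<Sum>b<M. rt N (j * (a + (N - b))))" for j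
  proof -
    have "complex_of_real ((cmod (\<Sum>a<M. rt N (j * a)))\<^sup>2) = (\<Sum>a<M. rt N (j * a)) * cnj (\<Sum>b<M. rt N (j * b))"
      by (rule complex_norm_square)
    also have "cnj (\<Sum>b<M. rt N (j * b)) = (\<Sum>b<M. rt N (j * (N - b)))"
      using kM by (simp add: rt_cnj[OF N])
    also have "(\<Sum>a<M. rt N (j * a)) * (\<Sum>b<M. rt N (j * (N - b))) = (\<Sum>a<M. \<Sum>b<M. rt N (j * a) * rt N (j * (N - b)))"
      by (rule sum_product)
    also have "\<dots> = (\<Sum>a<M. \<Sum>b<M. rt N (j * (a + (N - b))))"
      by (simp add: rt_mult add_mult_distrib2)
    finally show ?thesis .
  qed
  have "(\<Sum>j<N. wK N M j * rt N (j * k)) = (\<Sum>j<N. \<Sum>a<M. \<Sum>b<M. rt N (j * (a + (N - b) + k))) / (of_nat M * of_nat N)"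
  proof -
    have "wK N M j * rt N (j * k) = (\<Sum>a<M. \<Sum>b<M. rt N (j * (a + (N - b) + k))) / (of_nat M * of_nat N)" for j
    proof -
      have "wK N M j * rt N (j * k) = (\<Sum>a<M. \<Sum>b<M. rt N (j * (a + (N - b)))) * rt N (j * k) / (of_nat M * of_nat N)"
        unfolding wK_def of_real_divide sq by simp
      also have "(\<Sum>a<M. \<Sum>b<M. rt N (j * (a + (N - b)))) * rt N (j * k) = (\<Sum>a<M. \<Sum>b<M. rt N (j * (a + (N - b) + k)))"
        by (simp add: sum_distrib_right rt_mult add_mult_distrib2)
      finally show ?thesis .
    qed
    then show ?thesis by (simp add: sum_divide_distrib)
  qed
  also have "(\<Sum>j<N. \<Sum>a<M. \<Sum>b<M. rt N (j * (a + (N - b) + k))) = (\<Sum>a<M. \<Sum>b<M. \<Sum>j<N. rt N (j * (a + (N - b) + k)))"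
    by (simp add: sum.swap[of _ "{..<N}"] )
  also have "\<dots> = (\<Sum>a<M. \<Sum>b<M. if b = a + k then of_nat N else 0)"
  proof (intro sum.cong refl)
    fix a b assume ab: "a \<in> {..<M}" "b \<in> {..<M}"
    have "N dvd (a + (N - b) + k) \<longleftrightarrow> b = a + k"
    proof
      assume d: "N dvd (a + (N - b) + k)"
      have "0 < a + (N - b) + k" "a + (N - b) + k < 2 * N" using ab kM by auto
      then have "a + (N - b) + k = N" by (rule dvd_between[OF d])
      then show "b = a + k" using ab kM by simp
    qed (use ab kM in auto)
    then show "(\<Sum>j<N. rt N (j * (a + (N - b) + k))) = (if b = a + k then of_nat N else 0)"
      by (simp add: rt_orth[OF N])
  qed
  also have "\<dots> = of_nat N * (\<Sum>a<M. \<Sum>b<M. if b = a + k then 1 else 0)"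
    by (simp add: sum_distrib_left if_distrib cong: if_cong)
  also have "\<dots> = of_nat N * of_nat (M - k)" by (simp only: count_pairs)
  finally show ?thesis using N M by simp
qed

lemma wK_real: "wK N M j = complex_of_real (Re (wK N M j))" "Re (wK N M j) \<ge> 0"
  unfolding wK_def by simp_all

lemma wK_norm: assumes N: "N > 0" and M: "M > 0" "M \<le> N"
  shows "(\<Sum>j<N. wK N M j) = 1" "(\<Sum>j<N. cmod (wK N M j)) = 1"
proof -
  show s: "(\<Sum>j<N. wK N M j) = 1" using wK_coef[OF N M(1), of 0] M by (simp add: rt_def)
  have "cmod (wK N M j) = Re (wK N M j)" for j by (metis wK_real norm_of_real abs_of_nonneg)
  then have "(\<Sum>j<N. cmod (wK N M j)) = Re (\<Sum>j<N. wK N M j)" by simp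
  then show "(\<Sum>j<N. cmod (wK N M j)) = 1" using s by simp
qed

lemma geo_bound: assumes z: "cmod z = 1" "z \<noteq> 1"
  shows "cmod (\<Sum>a<M. z ^ a) \<le> 2 / cmod (z - 1)"
proof -
  have "(\<Sum>a<M. z ^ a) = (z ^ M - 1) / (z - 1)" using z(2) by (rule geometric_sum)
  moreover have "cmod (z ^ M - 1) \<le> 2"
    using norm_triangle_ineq4[of "z ^ M" 1] z(1) by (simp add: norm_power)
  ultimately show ?thesis by (simp add: norm_divide divide_right_mono)
qed

lemma wK_bound: assumes N: "N > 0" and M: "M > 0" and ne: "rt N j \<noteq> 1"
  shows "cmod (wK N M j) \<le> 4 / ((cmod (rt N j - 1))\<^sup>2 * real M * real N)"
proof -
  have "(\<Sum>a<M. rt N (j * a)) = (\<Sum>a<M. rt N j ^ a)" by (simp add: rt_pow)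
  then have c: "cmod (\<Sum>a<M. rt N (j * a)) \<le> 2 / cmod (rt N j - 1)"
    using geo_bound[OF rt_norm ne] by simp
  have p: "cmod (rt N j - 1) > 0" using ne by simp
  have "(cmod (\<Sum>a<M. rt N (j * a)))\<^sup>2 \<le> (2 / cmod (rt N j - 1))\<^sup>2"
    using c by (intro power_mono) simp_all
  also have "\<dots> = 4 / (cmod (rt N j - 1))\<^sup>2" by (simp add: power_divide)
  finally have "(cmod (\<Sum>a<M. rt N (j * a)))\<^sup>2 / (real M * real N) \<le> 4 / (cmod (rt N j - 1))\<^sup>2 / (real M * real N)"
    using N M by (intro divide_right_mono) simp_all
  moreover have "cmod (wK N M j) = (cmod (\<Sum>a<M. rt N (j * a)))\<^sup>2 / (real M * real N)"
    unfolding wK_def norm_of_real by simp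
  ultimately show ?thesis by (simp add: mult.assoc)
qed



context gset begin

lemma fejer: assumes S: "S \<in> alg_T T" and N: "N > 0" and M: "M > 0" "M \<le> N" and d: "\<delta> > 0"
  and cont: "\<forall>l. cmod l = 1 \<longrightarrow> cmod (l - 1) < \<delta> \<longrightarrow> onorm (\<lambda>x. \<gamma> l S x - S x) < \<eta>"
  shows "onorm (\<lambda>x. Av N (wK N M) S x - S x) \<le> \<eta> + 8 * onorm S / (real M * \<delta>\<^sup>2)"
proof -
  have bS: "bounded_op S" using S by (rule alg_bounded)
  have bg: "bounded_op (\<gamma> l S)" if "cmod l = 1" for l by (rule alg_bounded[OF g_maps[OF that S]])
  have bd: "bounded_op (\<lambda>x. \<gamma> (rt N j) S x - S x)" for j using bg[OF rt_norm] bS by (rule bounded_op_diff)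
  have "onorm (\<lambda>x. \<gamma> 1 S x - S x) < \<eta>" using cont d by simp
  then have eta: "\<eta> > 0" using onorm_nonneg[OF bounded_op_diff[OF bg bS], of 1] by simp
  have Sx: "S x = (\<Sum>j<N. wK N M j *\<^sub>C S x)" for x
    using wK_norm(1)[OF N M] by (simp add: scaleC_sum_left[symmetric] scaleC_one)
  have "(\<lambda>x. Av N (wK N M) S x - S x) = (\<lambda>x. \<Sum>j<N. wK N M j *\<^sub>C (\<gamma> (rt N j) S x - S x))"
    unfolding Av_def by (simp add: fun_eq_iff scaleC_diff_right sum_subtractf Sx[symmetric])
  then have "onorm (\<lambda>x. Av N (wK N M) S x - S x) = onorm (\<lambda>x. \<Sum>j<N. wK N M j *\<^sub>C (\<gamma> (rt N j) S x - S x))"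
    by simp
  also have "\<dots> \<le> (\<Sum>j<N. onorm (\<lambda>x. wK N M j *\<^sub>C (\<gamma> (rt N j) S x - S x)))"
    by (rule onorm_sum_op) (simp_all add: bounded_op_scale bd)
  also have "\<dots> = (\<Sum>j<N. cmod (wK N M j) * onorm (\<lambda>x. \<gamma> (rt N j) S x - S x))"
    by (intro sum.cong refl onorm_scaleC bd)
  also have "\<dots> \<le> (\<Sum>j<N. cmod (wK N M j) * \<eta> + 8 * onorm S / (real M * \<delta>\<^sup>2 * real N))"
  proof (intro sum_mono)
    fix j assume "j \<in> {..<N}"
    show "cmod (wK N M j) * onorm (\<lambda>x. \<gamma> (rt N j) S x - S x) \<le> cmod (wK N M j) * \<eta> + 8 * onorm S / (real M * \<delta>\<^sup>2 * real N)"
    proof (cases "cmod (rt N j - 1) < \<delta>")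
      case True
      then have "onorm (\<lambda>x. \<gamma> (rt N j) S x - S x) \<le> \<eta>" using cont rt_norm by (meson less_imp_le)
      then have "cmod (wK N M j) * onorm (\<lambda>x. \<gamma> (rt N j) S x - S x) \<le> cmod (wK N M j) * \<eta>"
        by (rule mult_left_mono) simp_all
      moreover have "0 \<le> 8 * onorm S / (real M * \<delta>\<^sup>2 * real N)" using onorm_nonneg[OF bS] by simp
      ultimately show ?thesis by linarith
    next
      case False
      have ne: "rt N j \<noteq> 1"
      proof
        assume "rt N j = 1" then show False using False d by simp
      qed
      have w: "cmod (wK N M j) \<le> 4 / ((cmod (rt N j - 1))\<^sup>2 * real M * real N)" by (rule wK_bound[OF N M(1) ne])
      have "4 / ((cmod (rt N j - 1))\<^sup>2 * real M * real N) \<le> 4 / (\<delta>\<^sup>2 * real M * real N)"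
        using False d N M ne by (intro divide_left_mono mult_right_mono mult_pos_pos power_mono) simp_all
      with w have w2: "cmod (wK N M j) \<le> 4 / (\<delta>\<^sup>2 * real M * real N)" by linarith
      have o: "onorm (\<lambda>x. \<gamma> (rt N j) S x - S x) \<le> 2 * onorm S"
        using onorm_diff_le[OF bg[OF rt_norm] bS] g_iso[OF rt_norm S] by simp
      have "cmod (wK N M j) * onorm (\<lambda>x. \<gamma> (rt N j) S x - S x) \<le> (4 / (\<delta>\<^sup>2 * real M * real N)) * (2 * onorm S)"
        using w2 o by (intro mult_mono) (simp_all add: onorm_nonneg bd)
      also have "\<dots> = 8 * onorm S / (real M * \<delta>\<^sup>2 * real N)" by (simp add: field_simps)
      finally have "cmod (wK N M j) * onorm (\<lambda>x. \<gamma> (rt N j) S x - S x) \<le> 8 * onorm S / (real M * \<delta>\<^sup>2 * real N)" .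
      moreover have "0 \<le> cmod (wK N M j) * \<eta>" using eta by simp
      ultimately show ?thesis by linarith
    qed
  qed
  also have "\<dots> = \<eta> * (\<Sum>j<N. cmod (wK N M j)) + real N * (8 * onorm S / (real M * \<delta>\<^sup>2 * real N))"
    by (simp add: sum.distrib sum_distrib_left mult.commute)
  also have "\<dots> = \<eta> + 8 * onorm S / (real M * \<delta>\<^sup>2)" using wK_norm(2)[OF N M] N by simp
  finally show ?thesis .
qed

end


lemma ci_sub: "closed_ideal T J \<Longrightarrow> J \<subseteq> alg_T T" unfolding closed_ideal_def by blast
lemma ci_zero: "closed_ideal T J \<Longrightarrow> (\<lambda>x. 0) \<in> J" unfolding closed_ideal_def by blast
lemma ci_add: "closed_ideal T J \<Longrightarrow> A \<in> J \<Longrightarrow> B \<in> J \<Longrightarrow> (\<lambda>x. A x + B x) \<in> J"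
  unfolding closed_ideal_def by blast
lemma ci_scale: "closed_ideal T J \<Longrightarrow> A \<in> J \<Longrightarrow> (\<lambda>x. c *\<^sub>C A x) \<in> J"
  unfolding closed_ideal_def by blast
lemma ci_mult: "closed_ideal T J \<Longrightarrow> A \<in> J \<Longrightarrow> B \<in> alg_T T \<Longrightarrow> B \<circ> A \<in> J"
  unfolding closed_ideal_def by blast
lemma ci_closed: "closed_ideal T J \<Longrightarrow> opnorm_closure J \<subseteq> J"
  unfolding closed_ideal_def op_closed_def by blast

lemma ci_sum: assumes CI: "closed_ideal T J" shows "finite I \<Longrightarrow> (\<And>i. i \<in> I \<Longrightarrow> f i \<in> J) \<Longrightarrow> (\<lambda>x. \<Sum>i\<in>I. f i x) \<in> J"
proof (induction I rule: finite_induct)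
  case empty
  then show ?case using ci_zero[OF CI] by simp
next
  case (insert a F)
  then have "(\<lambda>x. f a x + (\<lambda>x. \<Sum>i\<in>F. f i x) x) \<in> J" by (intro ci_add[OF CI]) auto
  then show ?case using insert by simp
qed

lemma sum_reidx: "finite A \<Longrightarrow> finite B \<Longrightarrow> (\<And>x. x \<in> A - B \<Longrightarrow> f x = 0) \<Longrightarrow> (\<And>x. x \<in> B - A \<Longrightarrow> g x = 0)
   \<Longrightarrow> (\<And>x. x \<in> A \<inter> B \<Longrightarrow> f x = g x) \<Longrightarrow> sum f A = sum g B"
proof -
  assume a: "finite A" "finite B" "\<And>x. x \<in> A - B \<Longrightarrow> f x = 0" "\<And>x. x \<in> B - A \<Longrightarrow> g x = 0"
     "\<And>x. x \<in> A \<inter> B \<Longrightarrow> f x = g x"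
  have "sum f A = sum f (A \<inter> B)" using a by (intro sum.mono_neutral_right) auto
  also have "\<dots> = sum g (A \<inter> B)" using a by (intro sum.cong) auto
  also have "\<dots> = sum g B" using a by (intro sum.mono_neutral_left) auto
  finally show ?thesis .
qed

locale jset = gset +
  fixes J
  assumes CI: "closed_ideal T J" and inv: "\<forall>l. cmod l = 1 \<longrightarrow> \<gamma> l ` J \<subseteq> J"
begin

lemma J_alg: "S \<in> J \<Longrightarrow> S \<in> alg_T T" using ci_sub[OF CI] by blast

lemma av_J: "S \<in> J \<Longrightarrow> Av N w S \<in> J"
  unfolding Av_def
proof (rule ci_sum[OF CI])
  assume S: "S \<in> J"
  fix j
  have "\<gamma> (rt N j) S \<in> J" using inv S rt_norm by blast
  then show "(\<lambda>x. w j *\<^sub>C \<gamma> (rt N j) S x) \<in> J" by (rule ci_scale[OF CI])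
qed simp

lemma J_dist: assumes n: "1 \<le> n" and nJ: "T ^^ n \<notin> J"
  shows "\<exists>d>0. \<forall>Q\<in>J. d \<le> onorm (\<lambda>x. (T ^^ n) x - Q x)"
proof (rule ccontr)
  assume "\<not> ?thesis"
  then have "\<forall>e>0. \<exists>Q\<in>J. onorm (\<lambda>x. (T ^^ n) x - Q x) < e" by (meson not_le)
  then have "T ^^ n \<in> opnorm_closure J"
    unfolding opnorm_closure_def using bounded_op_funpow[OF T] by blast
  then show False using ci_closed[OF CI] nJ by blast
qed

lemma coef_bound: assumes n: "1 \<le> n" and d: "\<forall>Q\<in>J. d \<le> onorm (\<lambda>x. (T ^^ n) x - Q x)" and dpos: "d > 0"
  and F: "F \<in> J" and e: "onorm (\<lambda>x. F x - c *\<^sub>C (T ^^ n) x) < \<epsilon>"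
  shows "cmod c * d \<le> \<epsilon>"
proof (cases "c = 0")
  case True
  have "0 \<le> onorm (\<lambda>x. F x - c *\<^sub>C (T ^^ n) x)"
    using J_alg[OF F] by (intro onorm_nonneg bounded_op_diff bounded_op_scale bounded_op_funpow T alg_bounded)
  then show ?thesis using True e by simp
next
  case False
  have F': "(\<lambda>x. inverse c *\<^sub>C F x) \<in> J" by (rule ci_scale[OF CI F])
  have eq: "(\<lambda>x. c *\<^sub>C (T ^^ n) x - F x) = (\<lambda>x. c *\<^sub>C ((T ^^ n) x - inverse c *\<^sub>C F x))"
    using False by (simp add: fun_eq_iff scaleC_diff_right scaleC_scaleC scaleC_one)
  have b: "bounded_op (\<lambda>x. (T ^^ n) x - inverse c *\<^sub>C F x)"
    using J_alg[OF F] by (intro bounded_op_diff bounded_op_scale bounded_op_funpow T alg_bounded)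
  have "cmod c * d \<le> cmod c * onorm (\<lambda>x. (T ^^ n) x - inverse c *\<^sub>C F x)"
    using d F' by (intro mult_left_mono) auto
  also have "\<dots> = onorm (\<lambda>x. c *\<^sub>C (T ^^ n) x - F x)" unfolding eq by (rule onorm_scaleC[OF b, symmetric])
  also have "\<dots> = onorm (\<lambda>x. F x - c *\<^sub>C (T ^^ n) x)" by (rule onorm_diff_commute)
  finally show ?thesis using e by linarith
qed

end


context jset begin

lemma approx: assumes S: "S \<in> J" and e: "e > 0"
  shows "\<exists>M a. onorm (\<lambda>x. S x - (\<Sum>n\<in>{1..<M}. (if T ^^ n \<in> J then a n else 0) *\<^sub>C (T ^^ n) x)) < e"
proof -
  have SA: "S \<in> alg_T T" by (rule J_alg[OF S])
  have bS: "bounded_op S" by (rule alg_bounded[OF SA])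
  have e4: "e / 4 > 0" using e by simp
  obtain \<delta> where d: "\<delta> > 0" and cont: "\<forall>l. cmod l = 1 \<longrightarrow> cmod (l - 1) < \<delta> \<longrightarrow> onorm (\<lambda>x. \<gamma> l S x - S x) < e / 4"
    using g_cont[OF SA e4] by blast
  obtain M0 :: nat where M0: "32 * onorm S / (e * \<delta>\<^sup>2) < real M0" using reals_Archimedean2 by blast
  define M where "M = Suc M0"
  have Mpos: "M > 0" unfolding M_def by simp
  have ed: "e * \<delta>\<^sup>2 > 0" using e d by simp
  have "32 * onorm S < real M0 * (e * \<delta>\<^sup>2)" using M0 ed by (simp add: pos_divide_less_eq)
  also have "\<dots> \<le> real M * (e * \<delta>\<^sup>2)" unfolding M_def using ed by (intro mult_right_mono) simp_all
  finally have "32 * onorm S < real M * (e * \<delta>\<^sup>2)" .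
  then have fe: "8 * onorm S / (real M * \<delta>\<^sup>2) < e / 4" using Mpos d
    by (simp add: pos_divide_less_eq field_simps)
  define B where "B = {n\<in>{1..<M}. T ^^ n \<notin> J}"
  have Bfin: "finite B" unfolding B_def by simp
  define dd where "dd n = (SOME d. d > 0 \<and> (\<forall>Q\<in>J. d \<le> onorm (\<lambda>x. (T ^^ n) x - Q x)))" for n
  have ddp: "dd n > 0 \<and> (\<forall>Q\<in>J. dd n \<le> onorm (\<lambda>x. (T ^^ n) x - Q x))" if "n \<in> B" for n
  proof -
    have "1 \<le> n" "T ^^ n \<notin> J" using that unfolding B_def by auto
    from J_dist[OF this] show ?thesis unfolding dd_def by (rule someI_ex)
  qed
  define C where "C = (\<Sum>n\<in>B. onorm (T ^^ n) / dd n)"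
  have C0: "C \<ge> 0" unfolding C_def using ddp
    by (intro sum_nonneg divide_nonneg_pos onorm_nonneg bounded_op_funpow T) auto
  define \<epsilon> where "\<epsilon> = e / (4 * (1 + C))"
  have epos: "\<epsilon> > 0" unfolding \<epsilon>_def using e C0 by simp
  have C1: "1 + C \<noteq> 0" using C0 by linarith
  have "\<epsilon> * (1 + C) = e / 4" unfolding \<epsilon>_def using C1 by (simp add: divide_simps)
  then have eC: "\<epsilon> + \<epsilon> * C = e / 4" by (simp add: algebra_simps)
  obtain p where p: "p \<in> poly_ops T" "onorm (\<lambda>x. S x - p x) < \<epsilon>" using alg_approx[OF SA epos] by blast
  then obtain m c where pdef: "p = (\<lambda>x. \<Sum>k\<in>{1..m}. c k *\<^sub>C (T ^^ k) x)"
    unfolding poly_ops_def by blast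
  have pA: "p \<in> alg_T T" by (rule poly_in_alg[OF T p(1)])
  define N where "N = m + M + 1"
  have N: "N > 0" "M \<le> N" unfolding N_def by simp_all
  define c' where "c' n = (if n \<le> m then c n else 0)" for n
  define a where "a n = c' n * (of_nat (M - n) / of_nat M)" for n
  define Q where "Q = (\<lambda>x. \<Sum>n\<in>{1..<M}. (if T ^^ n \<in> J then a n else 0) *\<^sub>C (T ^^ n) x)"
  have bT: "bounded_op (T ^^ n)" for n by (rule bounded_op_funpow[OF T])
  have bQ: "bounded_op Q" unfolding Q_def by (intro bounded_op_sum bounded_op_scale bT) simp_all
  have Phip: "Av N (wK N M) p = (\<lambda>x. \<Sum>n\<in>{1..<M}. a n *\<^sub>C (T ^^ n) x)"
  proof
    fix x
    have "Av N (wK N M) p x = (\<Sum>k\<in>{1..m}. (c k * (\<Sum>j<N. wK N M j * rt N (j * k))) *\<^sub>C (T ^^ k) x)"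
      unfolding pdef av_poly by simp
    also have "\<dots> = (\<Sum>k\<in>{1..m}. (c k * (of_nat (M - k) / of_nat M)) *\<^sub>C (T ^^ k) x)"
    proof (intro sum.cong refl)
      fix k assume "k \<in> {1..m}"
      then have "k + M \<le> N" unfolding N_def by simp
      then show "(c k * (\<Sum>j<N. wK N M j * rt N (j * k))) *\<^sub>C (T ^^ k) x = (c k * (of_nat (M - k) / of_nat M)) *\<^sub>C (T ^^ k) x"
        by (simp add: wK_coef[OF N(1) Mpos])
    qed
    also have "\<dots> = (\<Sum>n\<in>{1..<M}. a n *\<^sub>C (T ^^ n) x)"
      by (rule sum_reidx) (auto simp: a_def c'_def)
    finally show "Av N (wK N M) p x = (\<Sum>n\<in>{1..<M}. a n *\<^sub>C (T ^^ n) x)" .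
  qed
  have Fp: "Av N (wF N n) p = (\<lambda>x. c' n *\<^sub>C (T ^^ n) x)" if n: "n \<in> {1..<M}" for n
  proof
    fix x
    have "Av N (wF N n) p x = (\<Sum>k\<in>{1..m}. (c k * (\<Sum>j<N. wF N n j * rt N (j * k))) *\<^sub>C (T ^^ k) x)"
      unfolding pdef av_poly by simp
    also have "\<dots> = (\<Sum>k\<in>{1..m}. if k = n then c k *\<^sub>C (T ^^ k) x else 0)"
    proof (intro sum.cong refl)
      fix k assume "k \<in> {1..m}"
      then have "0 < n" "n < N" "0 < k" "k < N" using n unfolding N_def by auto
      then show "(c k * (\<Sum>j<N. wF N n j * rt N (j * k))) *\<^sub>C (T ^^ k) x = (if k = n then c k *\<^sub>C (T ^^ k) x else 0)"
        by (simp add: wF_coef)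
    qed
    also have "\<dots> = c' n *\<^sub>C (T ^^ n) x" using n by (simp add: sum.delta' c'_def)
    finally show "Av N (wF N n) p x = c' n *\<^sub>C (T ^^ n) x" .
  qed
  have cb: "cmod (c' n) * dd n \<le> \<epsilon>" if n: "n \<in> B" for n
  proof -
    have nM: "n \<in> {1..<M}" "1 \<le> n" using n unfolding B_def by auto
    have "onorm (\<lambda>x. Av N (wF N n) S x - Av N (wF N n) p x) \<le> (\<Sum>j<N. cmod (wF N n j)) * onorm (\<lambda>x. S x - p x)"
      by (rule av_lip[OF SA pA])
    also have "\<dots> < \<epsilon>" using wF_norm[OF N(1)] p(2) by simp
    finally have "onorm (\<lambda>x. Av N (wF N n) S x - c' n *\<^sub>C (T ^^ n) x) < \<epsilon>" unfolding Fp[OF nM(1)] .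
    then show ?thesis using coef_bound[OF nM(2) conjunct2[OF ddp[OF n]] conjunct1[OF ddp[OF n]] av_J[OF S]] by blast
  qed
  have bPS: "bounded_op (Av N (wK N M) S)" by (rule av_bounded[OF SA])
  have bPp: "bounded_op (Av N (wK N M) p)" by (rule av_bounded[OF pA])
  have E1: "onorm (\<lambda>x. S x - Av N (wK N M) S x) < e / 2"
  proof -
    have "onorm (\<lambda>x. Av N (wK N M) S x - S x) \<le> e / 4 + 8 * onorm S / (real M * \<delta>\<^sup>2)"
      by (rule fejer[OF SA N(1) Mpos N(2) d cont])
    then show ?thesis using fe onorm_diff_commute[of S "Av N (wK N M) S"] by linarith
  qed
  have E2: "onorm (\<lambda>x. Av N (wK N M) S x - Av N (wK N M) p x) < \<epsilon>"
  proof -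
    have "onorm (\<lambda>x. Av N (wK N M) S x - Av N (wK N M) p x) \<le> (\<Sum>j<N. cmod (wK N M j)) * onorm (\<lambda>x. S x - p x)"
      by (rule av_lip[OF SA pA])
    then show ?thesis using wK_norm(2)[OF N(1) Mpos N(2)] p(2) by simp
  qed
  have E3: "onorm (\<lambda>x. Av N (wK N M) p x - Q x) \<le> \<epsilon> * C"
  proof -
    have "(\<lambda>x. Av N (wK N M) p x - Q x) = (\<lambda>x. \<Sum>n\<in>{1..<M}. (if T ^^ n \<in> J then 0 else a n) *\<^sub>C (T ^^ n) x)"
    proof
      fix x
      show "Av N (wK N M) p x - Q x = (\<Sum>n\<in>{1..<M}. (if T ^^ n \<in> J then 0 else a n) *\<^sub>C (T ^^ n) x)"
        unfolding Phip Q_def sum_subtractf[symmetric] by (intro sum.cong refl) simp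
    qed
    then have "onorm (\<lambda>x. Av N (wK N M) p x - Q x) = onorm (\<lambda>x. \<Sum>n\<in>{1..<M}. (if T ^^ n \<in> J then 0 else a n) *\<^sub>C (T ^^ n) x)"
      by simp
    also have "\<dots> \<le> (\<Sum>n\<in>{1..<M}. onorm (\<lambda>x. (if T ^^ n \<in> J then 0 else a n) *\<^sub>C (T ^^ n) x))"
      by (rule onorm_sum_op) (simp_all add: bounded_op_scale bT)
    also have "\<dots> \<le> (\<Sum>n\<in>{1..<M}. if n \<in> B then \<epsilon> * (onorm (T ^^ n) / dd n) else 0)"
    proof (intro sum_mono)
      fix n assume n: "n \<in> {1..<M}"
      show "onorm (\<lambda>x. (if T ^^ n \<in> J then 0 else a n) *\<^sub>C (T ^^ n) x) \<le> (if n \<in> B then \<epsilon> * (onorm (T ^^ n) / dd n) else 0)"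
      proof (cases "n \<in> B")
        case False
        then have "T ^^ n \<in> J" using n unfolding B_def by auto
        then show ?thesis using False by (simp add: onorm_zero)
      next
        case True
        then have nJ: "T ^^ n \<notin> J" unfolding B_def by auto
        have dp: "dd n > 0" using ddp[OF True] by blast
        have "cmod (a n) \<le> cmod (c' n)"
        proof -
          have "cmod (of_nat (M - n) / of_nat M :: complex) \<le> 1" using Mpos by (simp add: norm_divide)
          then show ?thesis unfolding a_def norm_mult by (simp add: mult_left_le)
        qed
        also have "\<dots> \<le> \<epsilon> / dd n" using cb[OF True] dp by (simp add: pos_le_divide_eq)
        finally have an: "cmod (a n) \<le> \<epsilon> / dd n" .
        have "onorm (\<lambda>x. (if T ^^ n \<in> J then 0 else a n) *\<^sub>C (T ^^ n) x) = cmod (a n) * onorm (T ^^ n)"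
          using nJ onorm_scaleC[OF bT] by simp
        also have "\<dots> \<le> \<epsilon> / dd n * onorm (T ^^ n)" using an by (intro mult_right_mono onorm_nonneg bT)
        finally show ?thesis using True by simp
      qed
    qed
    also have "\<dots> = (\<Sum>n\<in>B. \<epsilon> * (onorm (T ^^ n) / dd n))"
    proof -
      have "B = {1..<M} \<inter> B" unfolding B_def by auto
      then show ?thesis using sum.inter_restrict[of "{1..<M}" "\<lambda>n. \<epsilon> * (onorm (T ^^ n) / dd n)" B] by simp
    qed
    also have "\<dots> = \<epsilon> * C" unfolding C_def by (simp add: sum_distrib_left)
    finally show ?thesis .
  qed
  have "onorm (\<lambda>x. S x - Q x) \<le> onorm (\<lambda>x. S x - Av N (wK N M) S x) + onorm (\<lambda>x. Av N (wK N M) S x - Q x)"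
    by (rule onorm_diff_tri[OF bS bPS bQ])
  also have "onorm (\<lambda>x. Av N (wK N M) S x - Q x) \<le> onorm (\<lambda>x. Av N (wK N M) S x - Av N (wK N M) p x) + onorm (\<lambda>x. Av N (wK N M) p x - Q x)"
    by (rule onorm_diff_tri[OF bPS bPp bQ])
  finally have "onorm (\<lambda>x. S x - Q x) < e" using E1 E2 E3 eC e by linarith
  then show ?thesis unfolding Q_def by blast
qed

end


theorem mainTheorem3:
  fixes T :: "'a::complex_hilbert_space \<Rightarrow> 'a"
    and \<gamma> :: "complex \<Rightarrow> ('a \<Rightarrow> 'a) \<Rightarrow> ('a \<Rightarrow> 'a)"
    and J :: "('a \<Rightarrow> 'a) set"
  assumes "bounded_op T"
    and "gauge_action T \<gamma>"
    and "closed_ideal T J"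
    and "J \<noteq> {\<lambda>x. 0}"
    and "\<forall>l. cmod l = 1 \<longrightarrow> \<gamma> l ` J \<subseteq> J"
  shows "\<exists>n::nat. n \<ge> 1 \<and> J = gen_ideal T (T ^^ n)"
proof -
  interpret jset T \<gamma> J using assms by unfold_locales
  have ex: "\<exists>n. 1 \<le> n \<and> T ^^ n \<in> J"
  proof (rule ccontr)
    assume no: "\<not> (\<exists>n. 1 \<le> n \<and> T ^^ n \<in> J)"
    have "J \<subseteq> {\<lambda>x. 0}"
    proof
      fix S assume S: "S \<in> J"
      have bS: "bounded_op S" by (rule alg_bounded[OF J_alg[OF S]])
      have lt: "onorm S < e" if e: "e > 0" for e
      proof -
        obtain M a where "onorm (\<lambda>x. S x - (\<Sum>n\<in>{1..<M}. (if T ^^ n \<in> J then a n else 0) *\<^sub>C (T ^^ n) x)) < e"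
          using approx[OF S e] by blast
        moreover have "(\<Sum>n\<in>{1..<M}. (if T ^^ n \<in> J then a n else 0) *\<^sub>C (T ^^ n) x) = 0" for x
          using no by (intro sum.neutral) auto
        ultimately show ?thesis by simp
      qed
      have "onorm S \<le> 0"
      proof (rule ccontr)
        assume "\<not> onorm S \<le> 0"
        then have "onorm S > 0" by simp
        then show False using lt[of "onorm S"] by simp
      qed
      then have "onorm S = 0" using onorm_nonneg[OF bS] by linarith
      then show "S \<in> {\<lambda>x. 0}" using onorm_zero_imp[OF bS] by simp
    qed
    then show False using assms(4) ci_zero[OF CI] by blast
  qed
  define n0 where "n0 = (LEAST n. 1 \<le> n \<and> T ^^ n \<in> J)"
  have n0: "1 \<le> n0" "T ^^ n0 \<in> J" using LeastI_ex[OF ex] unfolding n0_def by auto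
  have n0min: "n0 \<le> n" if "1 \<le> n" "T ^^ n \<in> J" for n
    unfolding n0_def using that by (intro Least_le) simp
  have "J = gen_ideal T (T ^^ n0)"
  proof
    show "gen_ideal T (T ^^ n0) \<subseteq> J" unfolding gen_ideal_def using CI n0(2) by blast
  next
    show "J \<subseteq> gen_ideal T (T ^^ n0)"
    proof
      fix S assume S: "S \<in> J"
      have bS: "bounded_op S" by (rule alg_bounded[OF J_alg[OF S]])
      show "S \<in> gen_ideal T (T ^^ n0)" unfolding gen_ideal_def
      proof (rule InterI)
        fix K assume "K \<in> {J. closed_ideal T J \<and> T ^^ n0 \<in> J}"
        then have K: "closed_ideal T K" "T ^^ n0 \<in> K" by auto
        have Kp: "T ^^ n \<in> K" if "1 \<le> n" "T ^^ n \<in> J" for n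
        proof (cases "n = n0")
          case True then show ?thesis using K by simp
        next
          case False
          then have nn: "n0 < n" using n0min[OF that] by simp
          then have "T ^^ n = T ^^ (n - n0) \<circ> T ^^ n0" by (simp add: funpow_add[symmetric])
          moreover have "T ^^ (n - n0) \<in> alg_T T" using nn by (intro alg_funpow T) simp
          ultimately show ?thesis using ci_mult[OF K(1) K(2)] by simp
        qed
        have "S \<in> opnorm_closure K"
          unfolding opnorm_closure_def
        proof (intro CollectI conjI allI impI bS)
          fix e :: real assume e: "e > 0"
          obtain M a where Ma: "onorm (\<lambda>x. S x - (\<Sum>n\<in>{1..<M}. (if T ^^ n \<in> J then a n else 0) *\<^sub>C (T ^^ n) x)) < e"
            using approx[OF S e] by blast
          have "(\<lambda>x. \<Sum>n\<in>{1..<M}. (if T ^^ n \<in> J then a n else 0) *\<^sub>C (T ^^ n) x) \<in> K"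
          proof (rule ci_sum[OF K(1)])
            fix n assume n: "n \<in> {1..<M}"
            show "(\<lambda>x. (if T ^^ n \<in> J then a n else 0) *\<^sub>C (T ^^ n) x) \<in> K"
            proof (cases "T ^^ n \<in> J")
              case True
              then have "T ^^ n \<in> K" using n Kp by simp
              then show ?thesis using True ci_scale[OF K(1)] by simp
            next
              case False
              then show ?thesis using ci_zero[OF K(1)] by simp
            qed
          qed simp
          then show "\<exists>Q\<in>K. onorm (\<lambda>x. S x - Q x) < e" using Ma
            by (intro bexI[of _ "\<lambda>x. \<Sum>n\<in>{1..<M}. (if T ^^ n \<in> J then a n else 0) *\<^sub>C (T ^^ n) x"]) simp_all
        qed
        then show "S \<in> K" using ci_closed[OF K(1)] by blast
      qed
    qed
  qed
  then show ?thesis using n0(1) by blast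
qed


end
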